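(* Fix $\mathbf{v}\in\mathbb{R}^{K+1}\setminus\{\mathbf{0}\}$ and $\bar{\mathbf{f}}\in\mathbb{C}^{n}\setminus\{\mathbf{0}\}$, and assume that the matrix $\mathbf{B}(\bar{\mathbf{f}},\mathbf{v})$ defined below is invertible. Then the first-order stationarity (KKT) condition of the unconstrained problem $\min_{\bar{\mathbf{f}},\mathbf{v}} f(\bar{\mathbf{f}},\mathbf{v})$ with respect to $\bar{\mathbf{f}}$, namely $\nabla_{\bar{\mathbf{f}}^*} f(\bar{\mathbf{f}},\mathbf{v})=\mathbf{0}$, holds if and only if $$\mathbf{B}(\bar{\mathbf{f}},\mathbf{v})^{-1}\mathbf{A}(\bar{\mathbf{f}},\mathbf{v})\,\bar{\mathbf{f}}=\lambda(\bar{\mathbf{f}},\mathbf{v})\,\bar{\mathbf{f}},$$ where $$\mathbf{A}(\bar{\mathbf{f}},\mathbf{v})=\lambda_{\mathrm{num}}\Big\{\sum_{j=1}^{K}\Big[R_{\mathrm{target},j}\Big(\tfrac{\mathbf{A}_j^{p}}{\bar{\mathbf{f}}^{H}\mathbf{A}_j^{p}\bar{\mathbf{f}}}+w_j\mathbf{L}_A\Big)+\bar R_{p,j}\tfrac{\mathbf{B}_j^{p}}{\bar{\mathbf{f}}^{H}\mathbf{B}_j^{p}\bar{\mathbf{f}}}+w_jC_j\mathbf{L}_B+w_j\bar R_{p,j}\mathbf{L}_B+C_j\tfrac{\mathbf{B}_j^{p}}{\bar{\mathbf{f}}^{H}\mathbf{B}_j^{p}\bar{\mathbf{f}}}\Big]+\eta_{\mathrm{mc}}\Big[R_{\mathrm{target,mc}}w_{K+1}\mathbf{L}_A+w_{K+1}C_{\mathrm{mc}}\mathbf{L}_B\Big]\Big\},$$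 $$\mathbf{B}(\bar{\mathbf{f}},\mathbf{v})=\lambda_{\mathrm{den}}\Big\{\sum_{j=1}^{K}\Big[R_{\mathrm{target},j}\Big(\tfrac{\mathbf{B}_j^{p}}{\bar{\mathbf{f}}^{H}\mathbf{B}_j^{p}\bar{\mathbf{f}}}+w_j\mathbf{L}_B\Big)+\bar R_{p,j}\tfrac{\mathbf{A}_j^{p}}{\bar{\mathbf{f}}^{H}\mathbf{A}_j^{p}\bar{\mathbf{f}}}+w_jC_j\mathbf{L}_A+w_j\bar R_{p,j}\mathbf{L}_A+C_j\tfrac{\mathbf{A}_j^{p}}{\bar{\mathbf{f}}^{H}\mathbf{A}_j^{p}\bar{\mathbf{f}}}\Big]+\eta_{\mathrm{mc}}\Big[R_{\mathrm{target,mc}}w_{K+1}\mathbf{L}_B+w_{K+1}C_{\mathrm{mc}}\mathbf{L}_A\Big]\Big\},$$ with all quantities $\lambda_{\mathrm{num}},\lambda_{\mathrm{den}},\lambda,w_j,C_j,C_{\mathrm{mc}},\bar R_{p,j},\mathbf{L}_A,\mathbf{L}_B$ evaluated at $(\bar{\mathbf{f}},\mathbf{v})$.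
   Context: Let $K\ge1$, $N_t\ge1$ be integers and $n:=N_t(K+1)$. For each $k\in\{1,\dots,K\}$ let $\mathbf{a}_k\in\mathbb{C}^{N_t}$ and $\gamma_k>0$; let $\sigma^2>0$, $P>0$, $\alpha>0$, $\eta_{\mathrm{mc}}>0$, and real numbers $R_{\mathrm{target},1},\dots,R_{\mathrm{target},K},R_{\mathrm{target,mc}}$ be given. Write $\mathrm{blkdiag}$ for a block-diagonal matrix with $K+1$ diagonal blocks of size $N_t\times N_t$, and $\mathbf{I}$ for the identity. Define the $n\times n$ matrices $\mathbf{A}_k^{c}=\mathrm{blkdiag}(\gamma_k\mathbf{a}_k\mathbf{a}_k^H,\dots,\gamma_k\mathbf{a}_k\mathbf{a}_k^H)+\frac{\sigma^2}{P}\mathbf{I}$, $\mathbf{B}_k^{c}=\mathbf{A}_k^{c}-\mathrm{blkdiag}(\gamma_k\mathbf{a}_k\mathbf{a}_k^H,0,\dots,0)$, $\mathbf{A}_k^{p}=\mathrm{blkdiag}(0,\gamma_k\mathbf{a}_k\mathbf{a}_k^H,\dots,\gamma_k\mathbf{a}_k\mathbf{a}_k^H)+\frac{\sigma^2}{P}\mathbf{I}$, $\mathbf{B}_k^{p}=\mathbf{A}_k^{p}-\mathrm{blkdiag}(0,\dots,0,\gamma_k\mathbf{a}_k\mathbf{a}_k^H,0,\dots,0)$ where the nonzero block is the $(k+1)$-th block. For $\bar{\mathbf{f}}\in\mathbb{C}^n\setminus\{\mathbf 0\}$ define $\bar R_{c,k}(\bar{\mathbf{f}})=\log_2\frac{\bar{\mathbf{f}}^H\mathbf{A}_k^c\bar{\mathbf{f}}}{\bar{\mathbf{f}}^H\mathbf{B}_k^c\bar{\mathbf{f}}}$,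 $\bar R_{p,k}(\bar{\mathbf{f}})=\log_2\frac{\bar{\mathbf{f}}^H\mathbf{A}_k^p\bar{\mathbf{f}}}{\bar{\mathbf{f}}^H\mathbf{B}_k^p\bar{\mathbf{f}}}$, the smoothed minimum (LogSumExp) $S(\bar{\mathbf{f}})=-\alpha\ln\big(\frac1K\sum_{i=1}^K\exp(-\bar R_{c,i}(\bar{\mathbf{f}})/\alpha)\big)$, the weights $\pi_i(\bar{\mathbf{f}})=\exp(-\bar R_{c,i}/\alpha)/\sum_{\ell=1}^K\exp(-\bar R_{c,\ell}/\alpha)$, and $\mathbf{L}_A(\bar{\mathbf{f}})=\sum_{i=1}^K\pi_i\frac{\mathbf{A}_i^c}{\bar{\mathbf{f}}^H\mathbf{A}_i^c\bar{\mathbf{f}}}$, $\mathbf{L}_B(\bar{\mathbf{f}})=\sum_{i=1}^K\pi_i\frac{\mathbf{B}_i^c}{\bar{\mathbf{f}}^H\mathbf{B}_i^c\bar{\mathbf{f}}}$. For $\mathbf{v}=(v_1,\dots,v_{K+1})^T\in\mathbb{R}^{K+1}\setminus\{\mathbf 0\}$, let $\mathbf{E}_k$ ($k=1,\dots,K+1$) be the $(K+1)\times(K+1)$ diagonal matrix with $1$ in position $(k,k)$ and $0$ elsewhere, $w_k(\mathbf{v})=\frac{\mathbf{v}^T\mathbf{E}_k\mathbf{v}}{\mathbf{v}^T\mathbf{v}}=\frac{v_k^2}{\|\mathbf{v}\|^2}$, $C_k(\bar{\mathbf{f}},\mathbf{v})=w_k(\mathbf{v})S(\bar{\mathbf{f}})$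 for $k=1,\dots,K$ (common-rate portions of unicast messages) and $C_{\mathrm{mc}}(\bar{\mathbf{f}},\mathbf{v})=w_{K+1}(\mathbf{v})S(\bar{\mathbf{f}})$ (multicast common-rate portion). Objective: $f(\bar{\mathbf{f}},\mathbf{v})=\sum_{j=1}^K\big(R_{\mathrm{target},j}-\bar R_{p,j}(\bar{\mathbf{f}})-C_j(\bar{\mathbf{f}},\mathbf{v})\big)^2+\eta_{\mathrm{mc}}\big(R_{\mathrm{target,mc}}-C_{\mathrm{mc}}(\bar{\mathbf{f}},\mathbf{v})\big)^2$. Scalars: $\lambda_{\mathrm{num}}(\bar{\mathbf{f}},\mathbf{v})=\prod_{j=1}^K\exp\big(-(R_{\mathrm{target},j}-\bar R_{p,j}-C_j)^2\big)$, $\lambda_{\mathrm{den}}(\bar{\mathbf{f}},\mathbf{v})=\exp\big(\eta_{\mathrm{mc}}(R_{\mathrm{target,mc}}-C_{\mathrm{mc}})^2\big)$, $\lambda(\bar{\mathbf{f}},\mathbf{v})=\lambda_{\mathrm{num}}/\lambda_{\mathrm{den}}=\exp(-f(\bar{\mathbf{f}},\mathbf{v}))$. $\nabla_{\bar{\mathbf{f}}^*}$ denotes the Wirtinger gradient with respect to the complex conjugate of $\bar{\mathbf{f}}$ (its vanishing is equivalent to vanishing of the real gradient with respect to the real and imaginary parts of $\bar{\mathbf{f}}$). *)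

theory Defs
  imports Complex_Main "Jordan_Normal_Form.Matrix"
begin

(* Users are indexed k = 1..K; the K+1 diagonal blocks
   of size Nt x Nt are indexed 0..K (block 0 = first block = common stream,
   block k = (k+1)-th block = private stream of user k). *)
record sysp =
  K :: nat
  Nt :: nat
  av :: "nat \<Rightarrow> complex vec"      (* a_k, k = 1..K, each of dimension Nt *)
  gam :: "nat \<Rightarrow> real"
  sig2 :: real
  Pw :: real
  alpha :: real
  eta_mc :: real
  Rt :: "nat \<Rightarrow> real"
  Rmc :: real

definition dimn :: "sysp \<Rightarrow> nat" where
  "dimn p = Nt p * (K p + 1)"

definition blkdiag_sel :: "sysp \<Rightarrow> nat set \<Rightarrow> complex mat \<Rightarrow> complex mat" where
  "blkdiag_sel p S M = mat (dimn p) (dimn p) (\<lambda>(i, j).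
     if i div Nt p = j div Nt p \<and> i div Nt p \<in> S then M $$ (i mod Nt p, j mod Nt p) else 0)"

definition gram :: "sysp \<Rightarrow> nat \<Rightarrow> complex mat" where
  "gram p k = complex_of_real (gam p k) \<cdot>\<^sub>m
     mat (Nt p) (Nt p) (\<lambda>(r, s). av p k $ r * cnj (av p k $ s))"

definition noise :: "sysp \<Rightarrow> complex mat" where
  "noise p = complex_of_real (sig2 p / Pw p) \<cdot>\<^sub>m 1\<^sub>m (dimn p)"

definition Ac :: "sysp \<Rightarrow> nat \<Rightarrow> complex mat" where
  "Ac p k = blkdiag_sel p {0..K p} (gram p k) + noise p"

definition Bc :: "sysp \<Rightarrow> nat \<Rightarrow> complex mat" where
  "Bc p k = Ac p k - blkdiag_sel p {0} (gram p k)"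

definition Ap :: "sysp \<Rightarrow> nat \<Rightarrow> complex mat" where
  "Ap p k = blkdiag_sel p {1..K p} (gram p k) + noise p"

definition Bp :: "sysp \<Rightarrow> nat \<Rightarrow> complex mat" where
  "Bp p k = Ap p k - blkdiag_sel p {k} (gram p k)"

(* quadratic form f^H M f (real for Hermitian M) *)
definition qf :: "complex mat \<Rightarrow> complex vec \<Rightarrow> real" where
  "qf M f = Re ((M *\<^sub>v f) \<bullet>c f)"

definition Rc :: "sysp \<Rightarrow> nat \<Rightarrow> complex vec \<Rightarrow> real" where
  "Rc p k f = log 2 (qf (Ac p k) f / qf (Bc p k) f)"

definition Rp :: "sysp \<Rightarrow> nat \<Rightarrow> complex vec \<Rightarrow> real" where
  "Rp p k f = log 2 (qf (Ap p k) f / qf (Bp p k) f)"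

definition Ssm :: "sysp \<Rightarrow> complex vec \<Rightarrow> real" where
  "Ssm p f = - alpha p * ln ((1 / real (K p)) * (\<Sum>i = 1..K p. exp (- Rc p i f / alpha p)))"

definition piw :: "sysp \<Rightarrow> nat \<Rightarrow> complex vec \<Rightarrow> real" where
  "piw p i f = exp (- Rc p i f / alpha p) / (\<Sum>l = 1..K p. exp (- Rc p l f / alpha p))"

definition msum :: "nat \<Rightarrow> (nat \<Rightarrow> complex mat) \<Rightarrow> nat set \<Rightarrow> complex mat" where
  "msum n F I = mat n n (\<lambda>(i, j). \<Sum>l\<in>I. F l $$ (i, j))"

definition sc :: "real \<Rightarrow> complex mat \<Rightarrow> complex mat" where
  "sc x M = complex_of_real x \<cdot>\<^sub>m M"

definition LA :: "sysp \<Rightarrow> complex vec \<Rightarrow> complex mat" where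
  "LA p f = msum (dimn p) (\<lambda>i. sc (piw p i f / qf (Ac p i) f) (Ac p i)) {1..K p}"

definition LB :: "sysp \<Rightarrow> complex vec \<Rightarrow> complex mat" where
  "LB p f = msum (dimn p) (\<lambda>i. sc (piw p i f / qf (Bc p i) f) (Bc p i)) {1..K p}"

(* w_k(v) = v_k^2 / ||v||^2, k = 1..K+1 (v stored 0-based) *)
definition wk :: "real vec \<Rightarrow> nat \<Rightarrow> real" where
  "wk v k = (v $ (k - 1))^2 / (v \<bullet> v)"

definition Cj :: "sysp \<Rightarrow> complex vec \<Rightarrow> real vec \<Rightarrow> nat \<Rightarrow> real" where
  "Cj p f v k = wk v k * Ssm p f"

definition Cmc :: "sysp \<Rightarrow> complex vec \<Rightarrow> real vec \<Rightarrow> real" where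
  "Cmc p f v = wk v (K p + 1) * Ssm p f"

definition obj :: "sysp \<Rightarrow> complex vec \<Rightarrow> real vec \<Rightarrow> real" where
  "obj p f v = (\<Sum>j = 1..K p. (Rt p j - Rp p j f - Cj p f v j)^2)
      + eta_mc p * (Rmc p - Cmc p f v)^2"

definition lam_num :: "sysp \<Rightarrow> complex vec \<Rightarrow> real vec \<Rightarrow> real" where
  "lam_num p f v = (\<Prod>j = 1..K p. exp (- ((Rt p j - Rp p j f - Cj p f v j)^2)))"

definition lam_den :: "sysp \<Rightarrow> complex vec \<Rightarrow> real vec \<Rightarrow> real" where
  "lam_den p f v = exp (eta_mc p * (Rmc p - Cmc p f v)^2)"

definition lam :: "sysp \<Rightarrow> complex vec \<Rightarrow> real vec \<Rightarrow> real" where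
  "lam p f v = lam_num p f v / lam_den p f v"

definition Amat :: "sysp \<Rightarrow> complex vec \<Rightarrow> real vec \<Rightarrow> complex mat" where
  "Amat p f v = sc (lam_num p f v)
     (msum (dimn p) (\<lambda>j.
         sc (Rt p j) (sc (1 / qf (Ap p j) f) (Ap p j) + sc (wk v j) (LA p f))
       + sc (Rp p j f / qf (Bp p j) f) (Bp p j)
       + sc (wk v j * Cj p f v j) (LB p f)
       + sc (wk v j * Rp p j f) (LB p f)
       + sc (Cj p f v j / qf (Bp p j) f) (Bp p j)) {1..K p}
      + sc (eta_mc p) (sc (Rmc p * wk v (K p + 1)) (LA p f)
                      + sc (wk v (K p + 1) * Cmc p f v) (LB p f)))"

definition Bmat :: "sysp \<Rightarrow> complex vec \<Rightarrow> real vec \<Rightarrow> complex mat" where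
  "Bmat p f v = sc (lam_den p f v)
     (msum (dimn p) (\<lambda>j.
         sc (Rt p j) (sc (1 / qf (Bp p j) f) (Bp p j) + sc (wk v j) (LB p f))
       + sc (Rp p j f / qf (Ap p j) f) (Ap p j)
       + sc (wk v j * Cj p f v j) (LA p f)
       + sc (wk v j * Rp p j f) (LA p f)
       + sc (Cj p f v j / qf (Ap p j) f) (Ap p j)) {1..K p}
      + sc (eta_mc p) (sc (Rmc p * wk v (K p + 1)) (LB p f)
                      + sc (wk v (K p + 1) * Cmc p f v) (LA p f)))"

definition deriv0 :: "(real \<Rightarrow> real) \<Rightarrow> real" where
  "deriv0 g = (THE D. (g has_real_derivative D) (at 0))"

definition inv_mat :: "complex mat \<Rightarrow> complex mat" where
  "inv_mat B = (SOME C. inverts_mat B C \<and> inverts_mat C B)"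

(* Wirtinger gradient w.r.t. the conjugate of x of a real-valued function F on C^n:
   component m is (1/2)(dF/dRe x_m + i dF/dIm x_m) *)
definition wgrad_conj :: "nat \<Rightarrow> (complex vec \<Rightarrow> real) \<Rightarrow> complex vec \<Rightarrow> complex vec" where
  "wgrad_conj n F x = vec n (\<lambda>m.
     (complex_of_real (deriv0 (\<lambda>t. F (x + complex_of_real t \<cdot>\<^sub>v unit_vec n m)))
      + \<i> * complex_of_real (deriv0 (\<lambda>t. F (x + (\<i> * complex_of_real t) \<cdot>\<^sub>v unit_vec n m)))) / 2)"

end

theory Submission
  imports Defs
begin


definition EE :: "nat \<Rightarrow> complex mat \<Rightarrow> complex vec \<Rightarrow> complex vec \<Rightarrow> complex" where
  "EE n M x y = (\<Sum>i<n. \<Sum>k<n. M $$ (i,k) * x $ k * cnj (y $ i))"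

lemma qf_EE:
  assumes "M \<in> carrier_mat n n" "g \<in> carrier_vec n"
  shows "qf M g = Re (EE n M g g)"
  using assms unfolding qf_def EE_def
  by (simp add: mult_mat_vec_def scalar_prod_def conjugate_vec_def row_def sum_distrib_right lessThan_atLeast0)

lemma EE_path:
  assumes "f \<in> carrier_vec n" "d \<in> carrier_vec n"
  shows "EE n M (f + complex_of_real t \<cdot>\<^sub>v d) (f + complex_of_real t \<cdot>\<^sub>v d)
     = EE n M f f + complex_of_real t * (EE n M f d + EE n M d f) + (complex_of_real t)^2 * EE n M d d"
  using assms unfolding EE_def
  by (simp add: algebra_simps power2_eq_square sum.distrib sum_distrib_left)



definition herm :: "nat \<Rightarrow> complex mat \<Rightarrow> bool" where
  "herm n M = (\<forall>i<n. \<forall>k<n. M $$ (i,k) = cnj (M $$ (k,i)))"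

lemma herm_D: "herm n M \<Longrightarrow> i < n \<Longrightarrow> k < n \<Longrightarrow> cnj (M $$ (i,k)) = M $$ (k,i)"
  unfolding herm_def by (metis complex_cnj_cnj)

lemma EE_herm:
  assumes "herm n M"
  shows "EE n M d f = cnj (EE n M f d)"
proof -
  have "cnj (EE n M f d) = (\<Sum>i<n. \<Sum>k<n. cnj (M $$ (i,k)) * cnj (f $ k) * d $ i)"
    unfolding EE_def by (simp add: cnj_sum)
  also have "\<dots> = (\<Sum>i<n. \<Sum>k<n. M $$ (k,i) * cnj (f $ k) * d $ i)"
    using herm_D[OF assms] by (intro sum.cong refl) simp
  also have "\<dots> = EE n M d f"
    unfolding EE_def by (subst sum.swap) (simp add: mult_ac)
  finally show ?thesis by simp
qed

lemma qf_path_deriv: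
  assumes "M \<in> carrier_mat n n" "herm n M" "f \<in> carrier_vec n" "d \<in> carrier_vec n"
  shows "((\<lambda>t. qf M (f + complex_of_real t \<cdot>\<^sub>v d)) has_real_derivative 2 * Re (EE n M f d)) (at 0)"
proof -
  have eq: "qf M (f + complex_of_real t \<cdot>\<^sub>v d) = Re (EE n M f f) + t * Re (EE n M f d + EE n M d f) + t^2 * Re (EE n M d d)" for t
  proof -
    have "f + complex_of_real t \<cdot>\<^sub>v d \<in> carrier_vec n" using assms by auto
    then have "qf M (f + complex_of_real t \<cdot>\<^sub>v d) = Re (EE n M (f + complex_of_real t \<cdot>\<^sub>v d) (f + complex_of_real t \<cdot>\<^sub>v d))"
      by (rule qf_EE[OF assms(1)])
    also have "\<dots> = Re (EE n M f f + complex_of_real t * (EE n M f d + EE n M d f) + (complex_of_real t)^2 * EE n M d d)"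
      using assms by (simp only: EE_path)
    also have "\<dots> = Re (EE n M f f) + t * Re (EE n M f d + EE n M d f) + t^2 * Re (EE n M d d)"
      by (simp add: power2_eq_square)
    finally show ?thesis .
  qed
  have "((\<lambda>t. Re (EE n M f f) + t * Re (EE n M f d + EE n M d f) + t^2 * Re (EE n M d d)) has_real_derivative
      Re (EE n M f d + EE n M d f)) (at 0)"
    by (auto intro!: derivative_eq_intros)
  moreover have "Re (EE n M f d + EE n M d f) = 2 * Re (EE n M f d)"
    using EE_herm[OF assms(2), of d f] by simp
  ultimately show ?thesis unfolding eq by simp
qed



lemma blk_carrier[simp]: "blkdiag_sel p S M \<in> carrier_mat (dimn p) (dimn p)"
  unfolding blkdiag_sel_def by simp
lemma noise_carrier[simp]: "noise p \<in> carrier_mat (dimn p) (dimn p)"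
  unfolding noise_def by simp
lemma blk_dims[simp]: "dim_row (blkdiag_sel p S M) = dimn p" "dim_col (blkdiag_sel p S M) = dimn p"
  unfolding blkdiag_sel_def by simp_all
lemma noise_dims[simp]: "dim_row (noise p) = dimn p" "dim_col (noise p) = dimn p"
  unfolding noise_def by simp_all

lemma blk_index: "i < dimn p \<Longrightarrow> j < dimn p \<Longrightarrow> blkdiag_sel p S M $$ (i,j) =
   (if i div Nt p = j div Nt p \<and> i div Nt p \<in> S then M $$ (i mod Nt p, j mod Nt p) else 0)"
  unfolding blkdiag_sel_def by simp

lemma gram_index: "r < Nt p \<Longrightarrow> s < Nt p \<Longrightarrow> gram p k $$ (r,s) =
   complex_of_real (gam p k) * (av p k $ r * cnj (av p k $ s))"
  unfolding gram_def by simp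

lemma noise_index: "i < dimn p \<Longrightarrow> j < dimn p \<Longrightarrow> noise p $$ (i,j) =
   (if i = j then complex_of_real (sig2 p / Pw p) else 0)"
  unfolding noise_def by simp

lemma Bc_eq: "Bc p k = blkdiag_sel p ({0..K p} - {0}) (gram p k) + noise p"
  unfolding Bc_def Ac_def by (rule eq_matI) (auto simp: blk_index)

lemma Bp_eq: "k \<in> {1..K p} \<Longrightarrow> Bp p k = blkdiag_sel p ({1..K p} - {k}) (gram p k) + noise p"
  unfolding Bp_def Ap_def by (rule eq_matI) (auto simp: blk_index)

lemma herm_bn:
  assumes "Nt p \<ge> 1"
  shows "herm (dimn p) (blkdiag_sel p S (gram p k) + noise p)"
proof -
  have "i mod Nt p < Nt p" for i using assms by simp
  then show ?thesis
    unfolding herm_def by (auto simp: blk_index gram_index noise_index)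
qed

lemma EE_add: "M \<in> carrier_mat n n \<Longrightarrow> N \<in> carrier_mat n n \<Longrightarrow> EE n (M + N) x y = EE n M x y + EE n N x y"
  unfolding EE_def by (simp add: algebra_simps sum.distrib)

lemma EE_noise: "EE (dimn p) (noise p) f f = complex_of_real (sig2 p / Pw p) * (\<Sum>i<dimn p. f $ i * cnj (f $ i))"
  unfolding EE_def by (simp add: noise_index sum_distrib_left mult_ac if_distrib if_distribR sum.delta cong: if_cong)



lemma blk_psd:
  assumes N: "Nt p \<ge> 1" and g: "gam p k \<ge> 0"
  shows "Re (EE (dimn p) (blkdiag_sel p S (gram p k)) f f) \<ge> 0"
proof -
  let ?n = "dimn p" and ?N = "Nt p" and ?a = "av p k"
  define B where "B = {b. b < ?n \<and> b \<in> S}"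
  define z where "z b = (\<Sum>j<?n. if j div ?N = b then cnj (?a $ (j mod ?N)) * f $ j else 0)" for b
  have czb: "cnj (z b) = (\<Sum>i<?n. if i div ?N = b then ?a $ (i mod ?N) * cnj (f $ i) else 0)" for b
    unfolding z_def by (simp add: cnj_sum if_distrib cong: if_cong)
  have fin: "finite B" unfolding B_def by simp
  have inner: "(\<Sum>b\<in>B. (if i div ?N = b then X else 0) * (if j div ?N = b then Y else 0))
      = (if i div ?N = j div ?N \<and> i div ?N \<in> S then X * Y else 0)" if "i < ?n" for i j and X Y :: complex
  proof -
    have "i div ?N \<le> i" by simp
    then have "i div ?N < ?n" using that by linarith
    then have iff: "i div ?N \<in> B \<longleftrightarrow> i div ?N \<in> S" unfolding B_def by simp
    have "(\<Sum>b\<in>B. (if i div ?N = b then X else 0) * (if j div ?N = b then Y else 0))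
        = (\<Sum>b\<in>B. if i div ?N = b then (if j div ?N = i div ?N then X * Y else 0) else 0)"
      by (intro sum.cong refl) auto
    also have "\<dots> = (if i div ?N \<in> B then (if j div ?N = i div ?N then X * Y else 0) else 0)"
      using fin by (rule sum.delta')
    finally show ?thesis using iff by auto
  qed
  have "(\<Sum>b\<in>B. cnj (z b) * z b) = (\<Sum>b\<in>B. \<Sum>i<?n. \<Sum>j<?n.
        (if i div ?N = b then ?a $ (i mod ?N) * cnj (f $ i) else 0) * (if j div ?N = b then cnj (?a $ (j mod ?N)) * f $ j else 0))"
    unfolding czb apply (simp add: z_def sum_distrib_left sum_distrib_right)
    apply (rule sum.cong[OF refl]) apply (rule sum.swap) done
  also have "\<dots> = (\<Sum>i<?n. \<Sum>j<?n. \<Sum>b\<in>B.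
        (if i div ?N = b then ?a $ (i mod ?N) * cnj (f $ i) else 0) * (if j div ?N = b then cnj (?a $ (j mod ?N)) * f $ j else 0))"
    by (subst sum.swap, rule sum.cong, rule refl, rule sum.swap)
  also have "\<dots> = (\<Sum>i<?n. \<Sum>j<?n. if i div ?N = j div ?N \<and> i div ?N \<in> S then
        (?a $ (i mod ?N) * cnj (f $ i)) * (cnj (?a $ (j mod ?N)) * f $ j) else 0)"
    by (intro sum.cong refl) (simp add: inner)
  finally have eq1: "(\<Sum>b\<in>B. cnj (z b) * z b) = \<dots>" .
  have "i mod ?N < ?N" for i using N by simp
  then have "EE ?n (blkdiag_sel p S (gram p k)) f f = complex_of_real (gam p k) * (\<Sum>i<?n. \<Sum>j<?n. if i div ?N = j div ?N \<and> i div ?N \<in> S then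
        (?a $ (i mod ?N) * cnj (f $ i)) * (cnj (?a $ (j mod ?N)) * f $ j) else 0)"
    unfolding EE_def by (auto simp: blk_index gram_index sum_distrib_left mult_ac intro!: sum.cong)
  also have "\<dots> = complex_of_real (gam p k) * (\<Sum>b\<in>B. complex_of_real ((Re (z b))^2 + (Im (z b))^2))"
    unfolding eq1[symmetric] by (simp add: complex_mult_cnj mult.commute)
  finally have "Re (EE ?n (blkdiag_sel p S (gram p k)) f f) = gam p k * (\<Sum>b\<in>B. (Re (z b))^2 + (Im (z b))^2)"
    by (simp flip: of_real_sum)
  moreover have "(\<Sum>b\<in>B. (Re (z b))^2 + (Im (z b))^2) \<ge> 0" by (intro sum_nonneg) simp
  ultimately show ?thesis using g by simp
qed



lemma bn_pos:
  assumes N: "Nt p \<ge> 1" and g: "gam p k \<ge> 0" and s: "sig2 p > 0" "Pw p > 0"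
    and f: "f \<in> carrier_vec (dimn p)" "f \<noteq> 0\<^sub>v (dimn p)"
  shows "qf (blkdiag_sel p S (gram p k) + noise p) f > 0"
proof -
  have "qf (blkdiag_sel p S (gram p k) + noise p) f = Re (EE (dimn p) (blkdiag_sel p S (gram p k)) f f) + Re (EE (dimn p) (noise p) f f)"
    using f by (simp add: qf_EE[of _ "dimn p"] EE_add[of _ "dimn p"])
  moreover have "Re (EE (dimn p) (noise p) f f) = sig2 p / Pw p * (\<Sum>i<dimn p. (Re (f$i))^2 + (Im (f$i))^2)"
    by (simp add: EE_noise complex_mult_cnj flip: of_real_sum)
  moreover have "(\<Sum>i<dimn p. (Re (f$i))^2 + (Im (f$i))^2) > 0"
  proof -
    obtain i where i: "i < dimn p" "f $ i \<noteq> 0" using f by (metis carrier_vecD eq_vecI index_zero_vec(1,2))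
    then have "(Re (f$i))^2 + (Im (f$i))^2 > 0" by (simp add: complex_eq_iff add_pos_pos sum_power2_gt_zero_iff)
    moreover have "(Re (f$i))^2 + (Im (f$i))^2 \<le> (\<Sum>i<dimn p. (Re (f$i))^2 + (Im (f$i))^2)"
      using i by (intro member_le_sum) auto
    ultimately show ?thesis by linarith
  qed
  ultimately show ?thesis using blk_psd[OF N g, of S f] s by (simp add: add_nonneg_pos)
qed

context
  fixes p :: sysp and f :: "complex vec"
  assumes N: "Nt p \<ge> 1" and gp: "\<And>k. k \<in> {1..K p} \<Longrightarrow> gam p k > 0"
    and s: "sig2 p > 0" "Pw p > 0"
    and f: "f \<in> carrier_vec (dimn p)" "f \<noteq> 0\<^sub>v (dimn p)"
begin

lemma Ac_pos: "k \<in> {1..K p} \<Longrightarrow> qf (Ac p k) f > 0"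
  unfolding Ac_def using bn_pos[OF N _ s f] gp by (simp add: less_imp_le)
lemma Bc_pos: "k \<in> {1..K p} \<Longrightarrow> qf (Bc p k) f > 0"
  unfolding Bc_eq using bn_pos[OF N _ s f] gp by (simp add: less_imp_le)
lemma Ap_pos: "k \<in> {1..K p} \<Longrightarrow> qf (Ap p k) f > 0"
  unfolding Ap_def using bn_pos[OF N _ s f] gp by (simp add: less_imp_le)
lemma Bp_pos: "k \<in> {1..K p} \<Longrightarrow> qf (Bp p k) f > 0"
  using bn_pos[OF N _ s f] gp by (simp add: less_imp_le Bp_eq)

end

lemma Ac_herm: "Nt p \<ge> 1 \<Longrightarrow> herm (dimn p) (Ac p k)" unfolding Ac_def by (rule herm_bn)
lemma Bc_herm: "Nt p \<ge> 1 \<Longrightarrow> herm (dimn p) (Bc p k)" unfolding Bc_eq by (rule herm_bn)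
lemma Ap_herm: "Nt p \<ge> 1 \<Longrightarrow> herm (dimn p) (Ap p k)" unfolding Ap_def by (rule herm_bn)
lemma Bp_herm: "Nt p \<ge> 1 \<Longrightarrow> k \<in> {1..K p} \<Longrightarrow> herm (dimn p) (Bp p k)" by (simp add: Bp_eq herm_bn)

lemma Ac_carrier[simp]: "Ac p k \<in> carrier_mat (dimn p) (dimn p)" unfolding Ac_def by simp
lemma Bc_carrier[simp]: "Bc p k \<in> carrier_mat (dimn p) (dimn p)" unfolding Bc_eq by simp
lemma Ap_carrier[simp]: "Ap p k \<in> carrier_mat (dimn p) (dimn p)" unfolding Ap_def by simp
lemma Bp_carrier[simp]: "Bp p k \<in> carrier_mat (dimn p) (dimn p)" unfolding Bp_def by (simp add: minus_carrier_mat)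



lemma log_quot_deriv:
  assumes a: "(a has_real_derivative a') (at 0)" and b: "(b has_real_derivative b') (at 0)"
    and pa: "a 0 > 0" and pb: "b 0 > 0"
  shows "((\<lambda>t. log 2 (a t / b t)) has_real_derivative (a' / a 0 - b' / b 0) / ln 2) (at 0)"
proof -
  have "((\<lambda>t. log 2 (a t / b t)) has_real_derivative
      1 / (ln 2 * (a 0 / b 0)) * ((a' * b 0 - a 0 * b') / (b 0 * b 0))) (at 0)"
    using pa pb by (auto intro!: derivative_eq_intros a b)
  moreover have "1 / (ln 2 * (a 0 / b 0)) * ((a' * b 0 - a 0 * b') / (b 0 * b 0)) = (a' / a 0 - b' / b 0) / ln 2"
    using pa pb by (simp add: field_simps)
  ultimately show ?thesis by simp
qed

lemma lse_deriv:
  assumes R: "\<And>i. i \<in> I \<Longrightarrow> (R i has_real_derivative R' i) (at 0)"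
    and al: "al > 0" and fin: "finite I" and ne: "I \<noteq> {}" and c: "c > 0"
  shows "((\<lambda>t. - al * ln (c * (\<Sum>i\<in>I. exp (- R i t / al)))) has_real_derivative
      (\<Sum>i\<in>I. exp (- R i 0 / al) / (\<Sum>l\<in>I. exp (- R l 0 / al)) * R' i)) (at 0)"
proof -
  let ?S = "\<Sum>l\<in>I. exp (- R l 0 / al)"
  have Spos: "?S > 0" using fin ne by (intro sum_pos) auto
  have d1: "((\<lambda>t. \<Sum>i\<in>I. exp (- R i t / al)) has_real_derivative (\<Sum>i\<in>I. exp (- R i 0 / al) * (- R' i / al))) (at 0)"
    using al by (intro DERIV_sum) (auto intro!: derivative_eq_intros R)
  have "((\<lambda>t. - al * ln (c * (\<Sum>i\<in>I. exp (- R i t / al)))) has_real_derivative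
      - al * (1 / (c * ?S) * (c * (\<Sum>i\<in>I. exp (- R i 0 / al) * (- R' i / al))))) (at 0)"
  proof -
    have d2: "((\<lambda>t. c * (\<Sum>i\<in>I. exp (- R i t / al))) has_real_derivative c * (\<Sum>i\<in>I. exp (- R i 0 / al) * (- R' i / al))) (at 0)"
      by (rule DERIV_cmult[OF d1])
    have "c * ?S > 0" using Spos c by simp
    from DERIV_chain2[OF DERIV_ln_divide[OF this] d2]
    show ?thesis by (rule DERIV_cmult)
  qed
  moreover have "- al * (1 / (c * ?S) * (c * (\<Sum>i\<in>I. exp (- R i 0 / al) * (- R' i / al))))
     = (\<Sum>i\<in>I. exp (- R i 0 / al) / ?S * R' i)"
  proof -
    let ?X = "\<Sum>i\<in>I. exp (- R i 0 / al) * R' i"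
    have e1: "(\<Sum>i\<in>I. exp (- R i 0 / al) * (- R' i / al)) = (\<Sum>i\<in>I. - (exp (- R i 0 / al) * R' i) / al)"
      by (intro sum.cong) auto
    also have "\<dots> = - ?X / al" by (simp add: sum_divide_distrib[symmetric] sum_negf)
    finally have e2: "(\<Sum>i\<in>I. exp (- R i 0 / al) * (- R' i / al)) = - ?X / al" .
    have "- al * (1 / (c * ?S) * (c * (- ?X / al))) = ?X / ?S" using Spos c al by (simp add: field_simps)
    also have "\<dots> = (\<Sum>i\<in>I. exp (- R i 0 / al) / ?S * R' i)"
      by (simp add: sum_divide_distrib mult_ac)
    finally show ?thesis unfolding e2 .
  qed
  ultimately show ?thesis by simp
qed



lemma EE_sc: "M \<in> carrier_mat n n \<Longrightarrow> EE n (sc x M) a b = complex_of_real x * EE n M a b"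
  unfolding EE_def sc_def by (simp add: sum_distrib_left mult_ac)

lemma sc_carrier[simp]: "M \<in> carrier_mat n m \<Longrightarrow> sc x M \<in> carrier_mat n m"
  unfolding sc_def by simp

lemma msum_carrier[simp]: "msum n F I \<in> carrier_mat n n"
  unfolding msum_def by simp

lemma EE_msum: "EE n (msum n F I) a b = (\<Sum>l\<in>I. EE n (F l) a b)"
proof -
  have "EE n (msum n F I) a b = (\<Sum>i<n. \<Sum>k<n. \<Sum>l\<in>I. F l $$ (i,k) * a $ k * cnj (b $ i))"
    by (simp add: EE_def msum_def sum_distrib_right)
  also have "\<dots> = (\<Sum>i<n. \<Sum>l\<in>I. \<Sum>k<n. F l $$ (i,k) * a $ k * cnj (b $ i))"
    by (rule sum.cong[OF refl], rule sum.swap)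
  also have "\<dots> = (\<Sum>l\<in>I. \<Sum>i<n. \<Sum>k<n. F l $$ (i,k) * a $ k * cnj (b $ i))"
    by (rule sum.swap)
  finally show ?thesis by (simp add: EE_def)
qed

lemma LA_carrier[simp]: "LA p f \<in> carrier_mat (dimn p) (dimn p)" unfolding LA_def by simp
lemma LB_carrier[simp]: "LB p f \<in> carrier_mat (dimn p) (dimn p)" unfolding LB_def by simp

lemma obj_deriv_abs:
  assumes P: "\<And>j. j \<in> I \<Longrightarrow> (P j has_real_derivative P' j) (at 0)"
    and S: "(S has_real_derivative S') (at 0)" and fin: "finite I"
  shows "((\<lambda>t. (\<Sum>j\<in>I. (r j - P j t - w j * S t)^2) + e * (rm - wm * S t)^2) has_real_derivative
     (\<Sum>j\<in>I. 2 * (r j - P j 0 - w j * S 0) * (- P' j - w j * S')) + e * (2 * (rm - wm * S 0) * (- wm * S'))) (at 0)"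
proof -
  have "((\<lambda>t. (\<Sum>j\<in>I. (r j - P j t - w j * S t)^2)) has_real_derivative
     (\<Sum>j\<in>I. 2 * (r j - P j 0 - w j * S 0) * (- P' j - w j * S'))) (at 0)"
    by (rule DERIV_sum) (auto intro!: derivative_eq_intros P S simp: algebra_simps)
  moreover have "((\<lambda>t. e * (rm - wm * S t)^2) has_real_derivative e * (2 * (rm - wm * S 0) * (- wm * S'))) (at 0)"
    by (auto intro!: derivative_eq_intros S)
  ultimately show ?thesis by (rule DERIV_add)
qed

lemma path0: "f \<in> carrier_vec n \<Longrightarrow> d \<in> carrier_vec n \<Longrightarrow> f + complex_of_real 0 \<cdot>\<^sub>v d = f"
  by (rule eq_vecI) auto

lemma EE_Re_sc: "M \<in> carrier_mat n n \<Longrightarrow> Re (EE n (sc x M) a b) = x * Re (EE n M a b)"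
  by (simp add: EE_sc)

lemma alg1:
  fixes L D Sp e rm wm S :: real
  assumes L: "L \<noteq> 0" and Sp: "Sp = 2 / L * D"
  shows "(\<Sum>j\<in>I. 2 * (r j - P j - w j * S) * (- ((2 * eA j / qA j - 2 * eB j / qB j) / L) - w j * Sp))
      + e * (2 * (rm - wm * S) * (- wm * Sp))
    = - (4 / L) * ((\<Sum>j\<in>I. (r j - P j - w j * S) * (eA j / qA j - eB j / qB j + w j * D))
      + e * (rm - wm * S) * wm * D)"
proof -
  have "(\<Sum>j\<in>I. 2 * (r j - P j - w j * S) * (- ((2 * eA j / qA j - 2 * eB j / qB j) / L) - w j * Sp))
     = (\<Sum>j\<in>I. - (4 / L) * ((r j - P j - w j * S) * (eA j / qA j - eB j / qB j + w j * D)))"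
    using L unfolding Sp by (intro sum.cong refl) (simp add: field_simps)
  also have "\<dots> = - (4 / L) * (\<Sum>j\<in>I. (r j - P j - w j * S) * (eA j / qA j - eB j / qB j + w j * D))"
    by (simp add: sum_distrib_left)
  finally show ?thesis using L unfolding Sp by (simp add: field_simps)
qed

lemma alg2:
  fixes ln ld LAl LBl e rm wm S :: real
  assumes "ln \<noteq> 0" "ld \<noteq> 0"
  shows "(ln * ((\<Sum>j\<in>I. r j * (1 / qA j * eA j + w j * LAl) + P j / qB j * eB j + w j * (w j * S) * LBl
              + w j * P j * LBl + w j * S / qB j * eB j) + e * (rm * wm * LAl + wm * (wm * S) * LBl))) / ln
       - (ld * ((\<Sum>j\<in>I. r j * (1 / qB j * eB j + w j * LBl) + P j / qA j * eA j + w j * (w j * S) * LAl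
              + w j * P j * LAl + w j * S / qA j * eA j) + e * (rm * wm * LBl + wm * (wm * S) * LAl))) / ld
     = (\<Sum>j\<in>I. (r j - P j - w j * S) * (eA j / qA j - eB j / qB j + w j * (LAl - LBl)))
      + e * (rm - wm * S) * wm * (LAl - LBl)"
proof -
  define SA where "SA = (\<Sum>j\<in>I. r j * (1 / qA j * eA j + w j * LAl) + P j / qB j * eB j + w j * (w j * S) * LBl
              + w j * P j * LBl + w j * S / qB j * eB j)"
  define SB where "SB = (\<Sum>j\<in>I. r j * (1 / qB j * eB j + w j * LBl) + P j / qA j * eA j + w j * (w j * S) * LAl
              + w j * P j * LAl + w j * S / qA j * eA j)"
  define T where "T = (\<Sum>j\<in>I. (r j - P j - w j * S) * (eA j / qA j - eB j / qB j + w j * (LAl - LBl)))"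
  have "SA - SB = T"
    unfolding SA_def SB_def T_def sum_subtractf[symmetric] by (intro sum.cong refl) (simp add: algebra_simps)
  then have T: "T = SA - SB" by simp
  have "(ln * (SA + e * (rm * wm * LAl + wm * (wm * S) * LBl))) / ln
       - (ld * (SB + e * (rm * wm * LBl + wm * (wm * S) * LAl))) / ld
     = T + e * (rm - wm * S) * wm * (LAl - LBl)"
    unfolding T using assms by (simp add: field_simps)
  then show ?thesis unfolding SA_def SB_def T_def .
qed



context
  fixes p :: sysp and f d :: "complex vec" and v :: "real vec"
  assumes K1: "K p \<ge> 1" and N: "Nt p \<ge> 1"
    and gp: "\<And>k. k \<in> {1..K p} \<Longrightarrow> gam p k > 0"
    and s: "sig2 p > 0" "Pw p > 0" and al: "alpha p > 0"
    and f: "f \<in> carrier_vec (dimn p)" "f \<noteq> 0\<^sub>v (dimn p)"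
    and d: "d \<in> carrier_vec (dimn p)"
begin

abbreviation "nn \<equiv> dimn p"
abbreviation "ell M \<equiv> Re (EE nn M f d)"

lemma g0: "f + complex_of_real 0 \<cdot>\<^sub>v d = f" using path0[OF f(1) d] .
lemma g0': "f + (0::complex) \<cdot>\<^sub>v d = f" using g0 by simp

lemma qd: "M \<in> carrier_mat nn nn \<Longrightarrow> herm nn M \<Longrightarrow>
  ((\<lambda>t. qf M (f + complex_of_real t \<cdot>\<^sub>v d)) has_real_derivative 2 * ell M) (at 0)"
  using qf_path_deriv f(1) d by blast

lemma Rc_d: "i \<in> {1..K p} \<Longrightarrow> ((\<lambda>t. Rc p i (f + complex_of_real t \<cdot>\<^sub>v d)) has_real_derivative
   (2 * ell (Ac p i) / qf (Ac p i) f - 2 * ell (Bc p i) / qf (Bc p i) f) / ln 2) (at 0)"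
  unfolding Rc_def
  using log_quot_deriv[OF qd[OF Ac_carrier Ac_herm[OF N]] qd[OF Bc_carrier Bc_herm[OF N]]]
    Ac_pos[OF N gp s f] Bc_pos[OF N gp s f] by (simp add: g0 g0')

lemma Rp_d: "i \<in> {1..K p} \<Longrightarrow> ((\<lambda>t. Rp p i (f + complex_of_real t \<cdot>\<^sub>v d)) has_real_derivative
   (2 * ell (Ap p i) / qf (Ap p i) f - 2 * ell (Bp p i) / qf (Bp p i) f) / ln 2) (at 0)"
  unfolding Rp_def
  using log_quot_deriv[OF qd[OF Ap_carrier Ap_herm[OF N]] qd[OF Bp_carrier Bp_herm[OF N]]]
    Ap_pos[OF N gp s f] Bp_pos[OF N gp s f] by (simp add: g0 g0')

lemma S_d: "((\<lambda>t. Ssm p (f + complex_of_real t \<cdot>\<^sub>v d)) has_real_derivative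
   (\<Sum>i\<in>{1..K p}. piw p i f * ((2 * ell (Ac p i) / qf (Ac p i) f - 2 * ell (Bc p i) / qf (Bc p i) f) / ln 2))) (at 0)"
proof -
  have "((\<lambda>t. - alpha p * ln ((1 / real (K p)) * (\<Sum>i\<in>{1..K p}. exp (- Rc p i (f + complex_of_real t \<cdot>\<^sub>v d) / alpha p)))) has_real_derivative
      (\<Sum>i\<in>{1..K p}. exp (- Rc p i (f + complex_of_real 0 \<cdot>\<^sub>v d) / alpha p) / (\<Sum>l\<in>{1..K p}. exp (- Rc p l (f + complex_of_real 0 \<cdot>\<^sub>v d) / alpha p))
         * ((2 * ell (Ac p i) / qf (Ac p i) f - 2 * ell (Bc p i) / qf (Bc p i) f) / ln 2))) (at 0)"
    using K1 by (intro lse_deriv[where R="\<lambda>i t. Rc p i (f + complex_of_real t \<cdot>\<^sub>v d)"] Rc_d al) auto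
  then show ?thesis unfolding Ssm_def piw_def g0 .
qed

lemma obj_d: "((\<lambda>t. obj p (f + complex_of_real t \<cdot>\<^sub>v d) v) has_real_derivative
   (\<Sum>j\<in>{1..K p}. 2 * (Rt p j - Rp p j f - wk v j * Ssm p f) *
        (- ((2 * ell (Ap p j) / qf (Ap p j) f - 2 * ell (Bp p j) / qf (Bp p j) f) / ln 2)
         - wk v j * (\<Sum>i\<in>{1..K p}. piw p i f * ((2 * ell (Ac p i) / qf (Ac p i) f - 2 * ell (Bc p i) / qf (Bc p i) f) / ln 2))))
   + eta_mc p * (2 * (Rmc p - wk v (K p + 1) * Ssm p f) *
        (- wk v (K p + 1) * (\<Sum>i\<in>{1..K p}. piw p i f * ((2 * ell (Ac p i) / qf (Ac p i) f - 2 * ell (Bc p i) / qf (Bc p i) f) / ln 2))))) (at 0)"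
  unfolding obj_def Cj_def Cmc_def
  using obj_deriv_abs[where P="\<lambda>j t. Rp p j (f + complex_of_real t \<cdot>\<^sub>v d)" and S="\<lambda>t. Ssm p (f + complex_of_real t \<cdot>\<^sub>v d)",
     OF Rp_d S_d, of "{1..K p}" "Rt p" "wk v" "eta_mc p" "Rmc p" "wk v (K p + 1)"]
  by (simp add: g0 g0')


lemma ellLA: "ell (LA p f) = (\<Sum>i\<in>{1..K p}. piw p i f / qf (Ac p i) f * ell (Ac p i))"
  unfolding LA_def by (simp add: EE_msum Re_sum EE_Re_sc)

lemma ellLB: "ell (LB p f) = (\<Sum>i\<in>{1..K p}. piw p i f / qf (Bc p i) f * ell (Bc p i))"
  unfolding LB_def by (simp add: EE_msum Re_sum EE_Re_sc)

lemma ellA: "ell (Amat p f v) = lam_num p f v * ((\<Sum>j\<in>{1..K p}.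
    Rt p j * (1 / qf (Ap p j) f * ell (Ap p j) + wk v j * ell (LA p f))
    + Rp p j f / qf (Bp p j) f * ell (Bp p j) + wk v j * (wk v j * Ssm p f) * ell (LB p f)
    + wk v j * Rp p j f * ell (LB p f) + wk v j * Ssm p f / qf (Bp p j) f * ell (Bp p j))
    + eta_mc p * (Rmc p * wk v (K p + 1) * ell (LA p f) + wk v (K p + 1) * (wk v (K p + 1) * Ssm p f) * ell (LB p f)))"
  unfolding Amat_def Cj_def Cmc_def
  by (simp add: EE_msum Re_sum EE_Re_sc EE_add[of _ nn])

lemma ellB: "ell (Bmat p f v) = lam_den p f v * ((\<Sum>j\<in>{1..K p}.
    Rt p j * (1 / qf (Bp p j) f * ell (Bp p j) + wk v j * ell (LB p f))
    + Rp p j f / qf (Ap p j) f * ell (Ap p j) + wk v j * (wk v j * Ssm p f) * ell (LA p f)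
    + wk v j * Rp p j f * ell (LA p f) + wk v j * Ssm p f / qf (Ap p j) f * ell (Ap p j))
    + eta_mc p * (Rmc p * wk v (K p + 1) * ell (LB p f) + wk v (K p + 1) * (wk v (K p + 1) * Ssm p f) * ell (LA p f)))"
  unfolding Bmat_def Cj_def Cmc_def
  by (simp add: EE_msum Re_sum EE_Re_sc EE_add[of _ nn])


lemma lam_num_pos: "lam_num p f v > 0"
  unfolding lam_num_def by (intro prod_pos) simp
lemma lam_den_pos: "lam_den p f v > 0"
  unfolding lam_den_def by simp

lemma Sp_eq: "(\<Sum>i\<in>{1..K p}. piw p i f * ((2 * ell (Ac p i) / qf (Ac p i) f - 2 * ell (Bc p i) / qf (Bc p i) f) / ln 2))
   = 2 / ln 2 * (ell (LA p f) - ell (LB p f))"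
proof -
  have "(\<Sum>i\<in>{1..K p}. piw p i f * ((2 * ell (Ac p i) / qf (Ac p i) f - 2 * ell (Bc p i) / qf (Bc p i) f) / ln 2))
     = (\<Sum>i\<in>{1..K p}. 2 / ln 2 * (piw p i f / qf (Ac p i) f * ell (Ac p i) - piw p i f / qf (Bc p i) f * ell (Bc p i)))"
    by (intro sum.cong refl) (simp add: field_simps)
  also have "\<dots> = 2 / ln 2 * (ell (LA p f) - ell (LB p f))"
    by (simp only: ellLA ellLB sum_subtractf[symmetric] sum_distrib_left)
  finally show ?thesis .
qed

lemma obj_d2: "((\<lambda>t. obj p (f + complex_of_real t \<cdot>\<^sub>v d) v) has_real_derivative
   - (4 / ln 2) * (ell (Amat p f v) / lam_num p f v - ell (Bmat p f v) / lam_den p f v)) (at 0)"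
proof -
  have L: "ln (2::real) \<noteq> 0" by simp
  note a1 = alg1[OF L Sp_eq, where r="Rt p" and P="\<lambda>j. Rp p j f" and w="wk v" and eA="\<lambda>j. ell (Ap p j)" and qA="\<lambda>j. qf (Ap p j) f"
     and eB="\<lambda>j. ell (Bp p j)" and qB="\<lambda>j. qf (Bp p j) f" and I="{1..K p}" and e="eta_mc p" and rm="Rmc p" and wm="wk v (K p + 1)" and S="Ssm p f"]
  note a2 = alg2[where ln="lam_num p f v" and ld="lam_den p f v" and r="Rt p" and qA="\<lambda>j. qf (Ap p j) f" and eA="\<lambda>j. ell (Ap p j)" and w="wk v"
     and LAl="ell (LA p f)" and P="\<lambda>j. Rp p j f" and qB="\<lambda>j. qf (Bp p j) f" and eB="\<lambda>j. ell (Bp p j)" and S="Ssm p f" and LBl="ell (LB p f)" and I="{1..K p}" and e="eta_mc p" and rm="Rmc p" and wm="wk v (K p + 1)"]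
  have "ell (Amat p f v) / lam_num p f v - ell (Bmat p f v) / lam_den p f v =
     (\<Sum>j\<in>{1..K p}. (Rt p j - Rp p j f - wk v j * Ssm p f) * (ell (Ap p j) / qf (Ap p j) f - ell (Bp p j) / qf (Bp p j) f + wk v j * (ell (LA p f) - ell (LB p f))))
      + eta_mc p * (Rmc p - wk v (K p + 1) * Ssm p f) * wk v (K p + 1) * (ell (LA p f) - ell (LB p f))"
    unfolding ellA ellB using a2 lam_num_pos lam_den_pos by simp
  with obj_d a1 show ?thesis by simp
qed
end


lemma deriv0_eq: "(g has_real_derivative D) (at 0) \<Longrightarrow> deriv0 g = D"
  unfolding deriv0_def by (rule the_equality) (auto intro: DERIV_unique)

lemma EE_unit: "M \<in> carrier_mat n n \<Longrightarrow> x \<in> carrier_vec n \<Longrightarrow> m < n \<Longrightarrow> EE n M x (unit_vec n m) = (M *\<^sub>v x) $ m"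
proof -
  assume M: "M \<in> carrier_mat n n" and x: "x \<in> carrier_vec n" and m: "m < n"
  have "EE n M x (unit_vec n m) = (\<Sum>i<n. if i = m then (\<Sum>k<n. M $$ (i,k) * x $ k) else 0)"
    unfolding EE_def using m by (intro sum.cong refl) auto
  also have "\<dots> = (\<Sum>k<n. M $$ (m,k) * x $ k)" using m by (simp add: sum.delta)
  also have "\<dots> = (M *\<^sub>v x) $ m"
    using M x m by (simp add: mult_mat_vec_def scalar_prod_def row_def lessThan_atLeast0)
  finally show ?thesis .
qed

lemma EE_iunit: "EE n M x (\<i> \<cdot>\<^sub>v unit_vec n m) = - \<i> * EE n M x (unit_vec n m)"
  unfolding EE_def by (simp add: sum_distrib_left mult_ac)

lemma Amat_carrier[simp]: "Amat p f v \<in> carrier_mat (dimn p) (dimn p)"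
  unfolding Amat_def by simp
lemma Bmat_carrier[simp]: "Bmat p f v \<in> carrier_mat (dimn p) (dimn p)"
  unfolding Bmat_def by simp

lemma inv_mat_props:
  assumes B: "B \<in> carrier_mat n n" and inv: "invertible_mat B"
  shows "inv_mat B \<in> carrier_mat n n" "B * inv_mat B = 1\<^sub>m n" "inv_mat B * B = 1\<^sub>m n"
proof -
  have ex: "\<exists>C. inverts_mat B C \<and> inverts_mat C B" using inv unfolding invertible_mat_def by blast
  have h: "inverts_mat B (inv_mat B) \<and> inverts_mat (inv_mat B) B"
    unfolding inv_mat_def by (rule someI_ex[OF ex])
  then have 1: "B * inv_mat B = 1\<^sub>m n" and 2: "inv_mat B * B = 1\<^sub>m (dim_row (inv_mat B))"
    using B unfolding inverts_mat_def by auto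
  have c: "dim_col (inv_mat B) = n" using arg_cong[OF 1, of dim_col] by simp
  have r: "dim_row (inv_mat B) = n" using arg_cong[OF 2, of dim_col] B by simp
  show "inv_mat B \<in> carrier_mat n n" using c r by auto
  show "B * inv_mat B = 1\<^sub>m n" by (rule 1)
  show "inv_mat B * B = 1\<^sub>m n" using 2 r by simp
qed



theorem lemma1:
  fixes p :: sysp and fb :: "complex vec" and v :: "real vec"
  assumes "K p \<ge> 1" and "Nt p \<ge> 1"
    and "\<And>k. k \<in> {1..K p} \<Longrightarrow> av p k \<in> carrier_vec (Nt p)"
    and "\<And>k. k \<in> {1..K p} \<Longrightarrow> gam p k > 0"
    and "sig2 p > 0" and "Pw p > 0" and "alpha p > 0" and "eta_mc p > 0"
    and "v \<in> carrier_vec (K p + 1)" and "v \<noteq> 0\<^sub>v (K p + 1)"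
    and "fb \<in> carrier_vec (dimn p)" and "fb \<noteq> 0\<^sub>v (dimn p)"
    and "invertible_mat (Bmat p fb v)"
  shows "wgrad_conj (dimn p) (\<lambda>g. obj p g v) fb = 0\<^sub>v (dimn p)
     \<longleftrightarrow> inv_mat (Bmat p fb v) *\<^sub>v (Amat p fb v *\<^sub>v fb) = complex_of_real (lam p fb v) \<cdot>\<^sub>v fb"
proof -
  let ?n = "dimn p"
  let ?A = "Amat p fb v" and ?B = "Bmat p fb v"
  let ?ln = "lam_num p fb v" and ?ld = "lam_den p fb v"
  define zA where "zA = ?A *\<^sub>v fb"
  define zB where "zB = ?B *\<^sub>v fb"
  have fb: "fb \<in> carrier_vec ?n" by (rule assms(11))
  have lnp: "?ln > 0" unfolding lam_num_def by (intro prod_pos) simp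
  have ldp: "?ld > 0" unfolding lam_den_def by simp
  have zAc: "zA \<in> carrier_vec ?n" unfolding zA_def by (rule mult_mat_vec_carrier[OF Amat_carrier fb])
  have zBc: "zB \<in> carrier_vec ?n" unfolding zB_def by (rule mult_mat_vec_carrier[OF Bmat_carrier fb])
  have od: "((\<lambda>t. obj p (fb + complex_of_real t \<cdot>\<^sub>v d) v) has_real_derivative
     - (4 / ln 2) * (Re (EE ?n ?A fb d) / ?ln - Re (EE ?n ?B fb d) / ?ld)) (at 0)" if "d \<in> carrier_vec ?n" for d
    apply (rule obj_d2) using assms that by auto
  have comp: "wgrad_conj ?n (\<lambda>g. obj p g v) fb $ m =
      - complex_of_real (2 / ln 2) * (zA $ m / complex_of_real ?ln - zB $ m / complex_of_real ?ld)" if m: "m < ?n" for m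
  proof -
    let ?e = "unit_vec ?n m"
    have ec: "?e \<in> carrier_vec ?n" by simp
    have iec: "\<i> \<cdot>\<^sub>v ?e \<in> carrier_vec ?n" by simp
    have D1: "deriv0 (\<lambda>t. obj p (fb + complex_of_real t \<cdot>\<^sub>v ?e) v) =
        - (4 / ln 2) * (Re (EE ?n ?A fb ?e) / ?ln - Re (EE ?n ?B fb ?e) / ?ld)"
      by (rule deriv0_eq[OF od[OF ec]])
    have peq: "(\<lambda>t. obj p (fb + (\<i> * complex_of_real t) \<cdot>\<^sub>v ?e) v) = (\<lambda>t. obj p (fb + complex_of_real t \<cdot>\<^sub>v (\<i> \<cdot>\<^sub>v ?e)) v)"
      by (simp add: smult_smult_assoc mult.commute)
    have D2: "deriv0 (\<lambda>t. obj p (fb + (\<i> * complex_of_real t) \<cdot>\<^sub>v ?e) v) =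
        - (4 / ln 2) * (Re (EE ?n ?A fb (\<i> \<cdot>\<^sub>v ?e)) / ?ln - Re (EE ?n ?B fb (\<i> \<cdot>\<^sub>v ?e)) / ?ld)"
      unfolding peq by (rule deriv0_eq[OF od[OF iec]])
    have eA: "EE ?n ?A fb ?e = zA $ m" unfolding zA_def using fb m by (simp add: EE_unit)
    have eB: "EE ?n ?B fb ?e = zB $ m" unfolding zB_def using fb m by (simp add: EE_unit)
    have "wgrad_conj ?n (\<lambda>g. obj p g v) fb $ m =
       (complex_of_real (- (4 / ln 2) * (Re (zA $ m) / ?ln - Re (zB $ m) / ?ld))
        + \<i> * complex_of_real (- (4 / ln 2) * (Im (zA $ m) / ?ln - Im (zB $ m) / ?ld))) / 2"
      unfolding wgrad_conj_def using m by (simp add: D1 D2 EE_iunit eA eB)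
    also have "\<dots> = - complex_of_real (2 / ln 2) * (zA $ m / complex_of_real ?ln - zB $ m / complex_of_real ?ld)"
      using lnp ldp by (simp add: complex_eq_iff field_simps)
    finally show ?thesis .
  qed
  have L: "wgrad_conj ?n (\<lambda>g. obj p g v) fb = 0\<^sub>v ?n \<longleftrightarrow> zA = complex_of_real (?ln / ?ld) \<cdot>\<^sub>v zB"
  proof
    assume h: "wgrad_conj ?n (\<lambda>g. obj p g v) fb = 0\<^sub>v ?n"
    show "zA = complex_of_real (?ln / ?ld) \<cdot>\<^sub>v zB"
    proof (rule eq_vecI)
      fix m assume "m < dim_vec (complex_of_real (?ln / ?ld) \<cdot>\<^sub>v zB)"
      then have m: "m < ?n" using zBc by simp
      have "wgrad_conj ?n (\<lambda>g. obj p g v) fb $ m = 0" using h m by simp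
      then have "complex_of_real (2 / ln 2) * (zA $ m / complex_of_real ?ln - zB $ m / complex_of_real ?ld) = 0"
        unfolding comp[OF m] by simp
      moreover have "complex_of_real (2 / ln 2) \<noteq> 0" by simp
      ultimately have "zA $ m / complex_of_real ?ln - zB $ m / complex_of_real ?ld = 0"
        using mult_eq_0_iff by blast
      then have "zA $ m / complex_of_real ?ln = zB $ m / complex_of_real ?ld" by simp
      then show "zA $ m = (complex_of_real (?ln / ?ld) \<cdot>\<^sub>v zB) $ m"
        using m zBc lnp ldp by (simp add: field_simps)
    next
      show "dim_vec zA = dim_vec (complex_of_real (?ln / ?ld) \<cdot>\<^sub>v zB)" using zAc zBc by simp
    qed
  next
    assume h: "zA = complex_of_real (?ln / ?ld) \<cdot>\<^sub>v zB"
    show "wgrad_conj ?n (\<lambda>g. obj p g v) fb = 0\<^sub>v ?n"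
    proof (rule eq_vecI)
      fix m assume "m < dim_vec (0\<^sub>v ?n :: complex vec)"
      then have m: "m < ?n" by simp
      have "zA $ m = complex_of_real (?ln / ?ld) * zB $ m" using h m zBc by simp
      then have "zA $ m / complex_of_real ?ln - zB $ m / complex_of_real ?ld = 0"
        using lnp ldp by (simp add: field_simps)
      then show "wgrad_conj ?n (\<lambda>g. obj p g v) fb $ m = 0\<^sub>v ?n $ m" using m unfolding comp[OF m] by simp
    next
      show "dim_vec (wgrad_conj ?n (\<lambda>g. obj p g v) fb) = dim_vec (0\<^sub>v ?n :: complex vec)"
        unfolding wgrad_conj_def by simp
    qed
  qed
  have Bc: "?B \<in> carrier_mat ?n ?n" by simp
  note ip = inv_mat_props[OF Bc assms(13)]
  have R: "inv_mat ?B *\<^sub>v zA = complex_of_real (lam p fb v) \<cdot>\<^sub>v fb \<longleftrightarrow> zA = complex_of_real (?ln / ?ld) \<cdot>\<^sub>v zB"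
  proof
    assume h: "inv_mat ?B *\<^sub>v zA = complex_of_real (lam p fb v) \<cdot>\<^sub>v fb"
    have "zA = (?B * inv_mat ?B) *\<^sub>v zA" unfolding ip(2) using zAc by simp
    also have "\<dots> = ?B *\<^sub>v (inv_mat ?B *\<^sub>v zA)" by (rule assoc_mult_mat_vec[OF Bc ip(1) zAc])
    also have "\<dots> = complex_of_real (lam p fb v) \<cdot>\<^sub>v zB" unfolding h zB_def by (rule mult_mat_vec[OF Bc fb])
    finally show "zA = complex_of_real (?ln / ?ld) \<cdot>\<^sub>v zB" unfolding lam_def .
  next
    assume h: "zA = complex_of_real (?ln / ?ld) \<cdot>\<^sub>v zB"
    have "inv_mat ?B *\<^sub>v zA = complex_of_real (?ln / ?ld) \<cdot>\<^sub>v (inv_mat ?B *\<^sub>v zB)"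
      unfolding h by (rule mult_mat_vec[OF ip(1) zBc])
    also have "inv_mat ?B *\<^sub>v zB = (inv_mat ?B * ?B) *\<^sub>v fb" unfolding zB_def by (rule assoc_mult_mat_vec[OF ip(1) Bc fb, symmetric])
    also have "\<dots> = fb" using ip fb by simp
    finally show "inv_mat ?B *\<^sub>v zA = complex_of_real (lam p fb v) \<cdot>\<^sub>v fb" unfolding lam_def .
  qed
  show ?thesis using L R unfolding zA_def by simp
qed

end
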